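(* Let $1\le k<i$ with $n-i\ge i-k$, and let $\lambda^{i,k}=[n-i,\,i-k,\,1^k]$. Let $\alpha=(1^{a_1},\dots,n^{a_n})$ and $\beta=(1^{b_1},\dots,n^{b_n})$ be conjugacy classes of $S_n$ with $a_j=b_j$ for all $j<i$. Then $\chi_{\lambda^{i,k}}(\alpha)-\chi_{\lambda^{i,k}}(\beta)=(-1)^k(a_i-b_i)$, $\;d_{\lambda^{i,k}}=\binom ni\binom{i-1}{k}\frac{n-2i+k+1}{n-i+k+1}$, and for a transposition $\tau$, $\frac{\chi_{\lambda^{i,k}}(\tau)}{d_{\lambda^{i,k}}}=1-\frac{i(n-i+k+1)}{\binom n2}$.
   Context: $[n-i,i-k,1^k]$ denotes the partition with parts $n-i$, $i-k$ and $k$ parts equal to $1$. $\chi_\lambda$ is the irreducible character of $S_n$ indexed by $\lambda$, $d_\lambda$ its dimension; $a_j$ is the number of $j$-cycles in class $\alpha$. *)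

theory Defs
  imports Complex_Main "HOL-Combinatorics.Permutations" "HOL-Library.FuncSet"
begin

text \<open>A conjugacy class of S_n is given by its cycle type a, where a j is the
number of j-cycles (j = 1..n); a is normalised to 0 outside 1..n.\<close>
definition cycle_type :: "nat \<Rightarrow> (nat \<Rightarrow> nat) \<Rightarrow> bool" where
  "cycle_type n a \<longleftrightarrow> (\<Sum>j=1..n. j * a j) = n \<and> (\<forall>j. (j = 0 \<or> n < j) \<longrightarrow> a j = 0)"

definition cycle_list :: "nat \<Rightarrow> (nat \<Rightarrow> nat) \<Rightarrow> nat list" where
  "cycle_list n a = concat (map (\<lambda>j. replicate (a j) j) [1..<Suc n])"

text \<open>Coefficient of x^m in the product of power sums p_rho in l variables
  x_0,...,x_(l-1): number of ways to assign each part of rho to a variable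
  so that the parts assigned to x_v sum to m v.\<close>
definition psum_coeff :: "nat list \<Rightarrow> nat \<Rightarrow> (nat \<Rightarrow> int) \<Rightarrow> nat" where
  "psum_coeff rho l m = card {f \<in> {..<length rho} \<rightarrow>\<^sub>E {..<l}.
      \<forall>v<l. int (\<Sum>t\<in>{t. t < length rho \<and> f t = v}. rho ! t) = m v}"

text \<open>Irreducible character chi_lambda of S_n evaluated at the class with cycle type a,
  via the Frobenius character formula: chi_lambda(rho) is the coefficient of
  x^(lambda+delta) in a_delta * p_rho, with l = length lambda variables,
  delta = (l-1, ..., 1, 0).\<close>
definition character :: "nat list \<Rightarrow> nat \<Rightarrow> (nat \<Rightarrow> nat) \<Rightarrow> int" where
  "character lam n a =
     (let l = length lam in
      \<Sum>\<sigma>\<in>{\<sigma>. \<sigma> permutes {..<l}}. sign \<sigma> *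
         int (psum_coeff (cycle_list n a) l
               (\<lambda>v. int (lam ! v) + int (l - 1 - v) - int (l - 1 - \<sigma> v))))"

definition id_class :: "nat \<Rightarrow> nat \<Rightarrow> nat" where
  "id_class n = (\<lambda>j. if j = 1 then n else 0)"

definition transp_class :: "nat \<Rightarrow> nat \<Rightarrow> nat" where
  "transp_class n = (\<lambda>j. if j = 1 then n - 2 else if j = 2 then 1 else 0)"

definition dimension :: "nat list \<Rightarrow> nat \<Rightarrow> int" where
  "dimension lam n = character lam n (id_class n)"

definition hook2 :: "nat \<Rightarrow> nat \<Rightarrow> nat \<Rightarrow> nat list" where
  "hook2 n i k = [n - i, i - k] @ replicate k 1"

end

theory Submission
  imports Defs
begin

fun pc :: "nat list \<Rightarrow> nat \<Rightarrow> (nat \<Rightarrow> int) \<Rightarrow> nat" where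
  "pc [] l m = (if \<forall>v<l. m v = 0 then 1 else 0)"
| "pc (x#xs) l m = (\<Sum>w<l. pc xs l (\<lambda>v. if v = w then m v - int x else m v))"

lemma pc_snoc: "pc (xs @ [x]) l m = (\<Sum>w<l. pc xs l (\<lambda>v. if v = w then m v - int x else m v))"
proof (induction xs arbitrary: m)
  case Nil then show ?case by simp
next
  case (Cons y xs)
  have "pc ((y # xs) @ [x]) l m = (\<Sum>u<l. \<Sum>w<l. pc xs l (\<lambda>v. if v = w then (if v = u then m v - int y else m v) - int x else (if v = u then m v - int y else m v)))"
    by (simp add: Cons)
  also have "\<dots> = (\<Sum>w<l. \<Sum>u<l. pc xs l (\<lambda>v. if v = u then (if v = w then m v - int x else m v) - int y else (if v = w then m v - int x else m v)))"
    apply (subst sum.swap)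
    apply (intro sum.cong refl arg_cong[where f="pc xs l"])
    by auto
  finally show ?case by simp
qed

lemma psum_coeff_Nil: "psum_coeff [] l m = (if \<forall>v<l. m v = 0 then 1 else 0)"
proof -
  have "{..<0::nat} \<rightarrow>\<^sub>E {..<l} = {\<lambda>_. undefined}" by auto
  then have "{f \<in> {..<length ([]::nat list)} \<rightarrow>\<^sub>E {..<l}. \<forall>v<l. int (\<Sum>t\<in>{t. t < length ([]::nat list) \<and> f t = v}. ([]::nat list) ! t) = m v}
     = (if \<forall>v<l. m v = 0 then {\<lambda>_. undefined} else {})" by (auto simp del: lessThan_0)
  then show ?thesis unfolding psum_coeff_def by simp
qed

lemma psum_coeff_snoc:
  "psum_coeff (xs @ [x]) l m = (\<Sum>w<l. psum_coeff xs l (\<lambda>v. if v = w then m v - int x else m v))"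
proof -
  define L where "L = length xs"
  define A where "A = (\<lambda>m. {f \<in> {..<L} \<rightarrow>\<^sub>E {..<l}.
      \<forall>v<l. int (\<Sum>t\<in>{t. t < L \<and> f t = v}. xs ! t) = m v})"
  define A' where "A' = {f \<in> {..<Suc L} \<rightarrow>\<^sub>E {..<l}.
      \<forall>v<l. int (\<Sum>t\<in>{t. t < Suc L \<and> f t = v}. (xs@[x]) ! t) = m v}"
  define B where "B = (\<lambda>w. A (\<lambda>v. if v = w then m v - int x else m v))"
  have lhs: "psum_coeff (xs @ [x]) l m = card A'" unfolding psum_coeff_def A'_def L_def by simp
  have rhs: "psum_coeff xs l mm = card (A mm)" for mm unfolding psum_coeff_def A_def L_def by simp
  have key: "(\<Sum>t\<in>{t. t < Suc L \<and> f t = v}. (xs@[x]) ! t) =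
      (\<Sum>t\<in>{t. t < L \<and> f t = v}. xs ! t) + (if f L = v then x else 0)" for f :: "nat \<Rightarrow> nat" and v
  proof -
    have "{t. t < Suc L \<and> f t = v} = {t. t < L \<and> f t = v} \<union> (if f L = v then {L} else {})"
      by (auto simp: less_Suc_eq)
    moreover have "(\<Sum>t\<in>{t. t < L \<and> f t = v}. (xs@[x]) ! t) = (\<Sum>t\<in>{t. t < L \<and> f t = v}. xs ! t)"
      by (intro sum.cong) (auto simp: nth_append L_def)
    moreover have "finite {t. t < L \<and> f t = v}" by auto
    moreover have "(xs@[x]) ! L = x" by (simp add: L_def)
    ultimately show ?thesis by (simp add: sum.union_disjoint)
  qed
  have key2: "(\<Sum>t\<in>{t. t < L \<and> (f(L := w)) t = v}. xs ! t) = (\<Sum>t\<in>{t. t < L \<and> f t = v}. xs ! t)" for f :: "nat \<Rightarrow> nat" and w v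
    by (intro sum.cong) auto
  have bij: "bij_betw (\<lambda>f. (f L, f(L := undefined))) A' (Sigma {..<l} B)"
  proof (rule bij_betwI[where g="\<lambda>(w, g). g(L := w)"])
    show "(\<lambda>f. (f L, f(L := undefined))) \<in> A' \<rightarrow> Sigma {..<l} B"
    proof
      fix f assume f: "f \<in> A'"
      then have fL: "f L < l" unfolding A'_def by auto
      have "f(L := undefined) \<in> B (f L)"
        unfolding B_def A_def
      proof (intro CollectI conjI allI impI)
        have "f \<in> {..<Suc L} \<rightarrow>\<^sub>E {..<l}" using f unfolding A'_def by blast
        then show "f(L := undefined) \<in> {..<L} \<rightarrow>\<^sub>E {..<l}" unfolding PiE_iff extensional_def by auto
      next
        fix v assume "v < l"
        then have "int (\<Sum>t\<in>{t. t < Suc L \<and> f t = v}. (xs@[x]) ! t) = m v" using f unfolding A'_def by auto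
        then show "int (\<Sum>t\<in>{t. t < L \<and> (f(L := undefined)) t = v}. xs ! t) = (if v = f L then m v - int x else m v)"
          using key[of f v] key2[of f undefined v] by (cases "f L = v") auto
      qed
      then show "(f L, f(L := undefined)) \<in> Sigma {..<l} B" using fL by auto
    qed
    show "(\<lambda>(w, g). g(L := w)) \<in> Sigma {..<l} B \<rightarrow> A'"
    proof
      fix p assume "p \<in> Sigma {..<l} B"
      then obtain w g where p: "p = (w, g)" "w < l" "g \<in> B w" by auto
      have "g(L := w) \<in> A'" unfolding A'_def
      proof (intro CollectI conjI allI impI)
        have "g \<in> {..<L} \<rightarrow>\<^sub>E {..<l}" using p unfolding B_def A_def by blast
        then show "g(L := w) \<in> {..<Suc L} \<rightarrow>\<^sub>E {..<l}" using p unfolding PiE_iff extensional_def by auto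
      next
        fix v assume v: "v < l"
        have "int (\<Sum>t\<in>{t. t < L \<and> g t = v}. xs ! t) = (if v = w then m v - int x else m v)"
          using p v unfolding B_def A_def by auto
        then show "int (\<Sum>t\<in>{t. t < Suc L \<and> (g(L := w)) t = v}. (xs @ [x]) ! t) = m v"
          using key[of "g(L := w)" v] key2[of g w v] by auto
      qed
      then show "(\<lambda>(w, g). g(L := w)) p \<in> A'" using p by simp
    qed
    show "(\<lambda>(w, g). g(L := w)) (f L, f(L := undefined)) = f" if "f \<in> A'" for f by auto
    show "(\<lambda>f. (f L, f(L := undefined))) ((\<lambda>(w, g). g(L := w)) p) = p"
      if pin: "p \<in> Sigma {..<l} B" for p
    proof -
      obtain w g where p: "p = (w, g)" "g \<in> B w" using pin by (cases p) auto
      then have "g \<in> {..<L} \<rightarrow>\<^sub>E {..<l}" unfolding B_def A_def by blast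
      then have "g L = undefined" unfolding PiE_iff extensional_def by auto
      then show ?thesis using p by auto
    qed
  qed
  have fin: "finite (B w)" for w
    unfolding B_def A_def by (rule finite_subset[OF _ finite_PiE[of "{..<L}" "\<lambda>_. {..<l}"]]) auto
  have "card A' = card (Sigma {..<l} B)" using bij_betw_same_card[OF bij] .
  also have "\<dots> = (\<Sum>w<l. card (B w))" using fin by (simp add: card_SigmaI)
  finally show ?thesis unfolding lhs B_def rhs .
qed

lemma psum_coeff_pc: "psum_coeff xs l m = pc xs l m"
proof (induction xs arbitrary: m rule: rev_induct)
  case Nil then show ?case by (simp add: psum_coeff_Nil)
next
  case (snoc x xs) then show ?case by (simp add: psum_coeff_snoc pc_snoc)
qed

lemma pc_cong: "(\<forall>v<l. m v = m' v) \<Longrightarrow> pc xs l m = pc xs l m'"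
proof (induction xs arbitrary: m m')
  case Nil then show ?case by simp
next
  case (Cons x xs)
  show ?case unfolding pc.simps
    by (intro sum.cong refl Cons.IH) (use Cons.prems in auto)
qed

lemma pc_neg: "v < l \<Longrightarrow> m v < 0 \<Longrightarrow> pc xs l m = 0"
proof (induction xs arbitrary: m)
  case Nil then show ?case by auto
next
  case (Cons x xs)
  show ?case unfolding pc.simps
    by (intro sum.neutral ballI Cons.IH) (use Cons.prems in auto)
qed

lemma pc_perm:
  assumes "\<pi> permutes {..<l}"
  shows "pc xs l (\<lambda>v. m (\<pi> v)) = pc xs l m"
proof (induction xs arbitrary: m)
  case Nil
  have "(\<forall>v<l. m (\<pi> v) = 0) \<longleftrightarrow> (\<forall>v<l. m v = 0)"
  proof
    assume H: "\<forall>v<l. m (\<pi> v) = 0"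
    show "\<forall>v<l. m v = 0"
    proof (intro allI impI)
      fix v assume "v < l"
      then have "inv \<pi> v < l" using permutes_in_image[OF permutes_inv[OF assms]] by auto
      then show "m v = 0" using H permutes_inverses(1)[OF assms] by metis
    qed
  next
    assume "\<forall>v<l. m v = 0"
    then show "\<forall>v<l. m (\<pi> v) = 0" using permutes_in_image[OF assms] by auto
  qed
  then show ?case by simp
next
  case (Cons x xs)
  have inj: "\<pi> v = \<pi> w \<longleftrightarrow> v = w" for v w
    using permutes_inj[OF assms] by (auto dest: injD)
  have "pc (x # xs) l (\<lambda>v. m (\<pi> v)) =
      (\<Sum>w<l. pc xs l (\<lambda>v. (\<lambda>u. if u = \<pi> w then m u - int x else m u) (\<pi> v)))"
    unfolding pc.simps by (simp add: inj)
  also have "\<dots> = (\<Sum>w<l. pc xs l (\<lambda>u. if u = \<pi> w then m u - int x else m u))"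
    by (intro sum.cong refl) (rule Cons.IH)
  also have "\<dots> = (\<Sum>w<l. pc xs l (\<lambda>u. if u = w then m u - int x else m u))"
    using sum.permute[OF assms, of "\<lambda>w. pc xs l (\<lambda>u. if u = w then m u - int x else m u)"]
    by (simp add: o_def)
  finally show ?case by simp
qed

lemma pc_single:
  assumes "\<forall>x\<in>set xs. 1 \<le> x" "0 < l" "\<forall>v. 0 < v \<and> v < l \<longrightarrow> m v = 0"
  shows "pc xs l m = (if m 0 = int (sum_list xs) then 1 else 0)"
  using assms
proof (induction xs arbitrary: m)
  case Nil
  then have "(\<forall>v<l. m v = 0) \<longleftrightarrow> m 0 = 0" by (metis gr0I)
  then show ?case by simp
next
  case (Cons x xs)
  obtain l' where l: "l = Suc l'" using Cons.prems(2) by (cases l) auto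
  have z: "pc xs l (\<lambda>v. if v = Suc w then m v - int x else m v) = 0" if "w < l'" for w
    by (rule pc_neg[of "Suc w"]) (use that l Cons.prems in auto)
  have "pc (x # xs) l m = pc xs l (\<lambda>v. if v = 0 then m v - int x else m v)"
    unfolding pc.simps l sum.lessThan_Suc_shift using z l by simp
  also have "\<dots> = (if m 0 - int x = int (sum_list xs) then 1 else 0)"
    by (subst Cons.IH) (use Cons.prems in auto)
  finally show ?case by auto
qed

definition Fc :: "nat \<Rightarrow> (nat \<Rightarrow> int) \<Rightarrow> nat list \<Rightarrow> int" where
  "Fc l \<nu> \<rho> = (\<Sum>\<sigma>\<in>{\<sigma>. \<sigma> permutes {..<l}}. sign \<sigma> * int (pc \<rho> l (\<lambda>v. \<nu> v + int (\<sigma> v) - int v)))"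

lemma character_Fc:
  "character lam n a = Fc (length lam) (\<lambda>v. int (lam ! v)) (cycle_list n a)"
  unfolding character_def Let_def Fc_def psum_coeff_pc
proof (intro sum.cong refl arg_cong2[where f="(*)"] arg_cong[where f=int] pc_cong allI impI)
  fix \<sigma> v assume s: "\<sigma> \<in> {\<sigma>. \<sigma> permutes {..<length lam}}" and v: "v < length lam"
  then have "\<sigma> v < length lam" using permutes_in_image by fastforce
  then show "int (lam ! v) + int (length lam - 1 - v) - int (length lam - 1 - \<sigma> v) =
      int (lam ! v) + int (\<sigma> v) - int v" using v by simp
qed

lemma Fc_cong: "(\<forall>v<l. \<nu> v = \<nu>' v) \<Longrightarrow> Fc l \<nu> \<rho> = Fc l \<nu>' \<rho>"
  unfolding Fc_def by (intro sum.cong refl arg_cong2[where f="(*)"] arg_cong[where f=int] pc_cong) auto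

lemma Fc_neg: "v < l \<Longrightarrow> \<nu> v + int l - 1 - int v < 0 \<Longrightarrow> Fc l \<nu> \<rho> = 0"
  unfolding Fc_def
proof (intro sum.neutral ballI)
  fix \<sigma> assume "v < l" "\<nu> v + int l - 1 - int v < 0" "\<sigma> \<in> {\<sigma>. \<sigma> permutes {..<l}}"
  moreover then have "\<sigma> v < l" using permutes_in_image by fastforce
  ultimately show "sign \<sigma> * int (pc \<rho> l (\<lambda>v. \<nu> v + int (\<sigma> v) - int v)) = 0"
    using pc_neg[of v l "\<lambda>v. \<nu> v + int (\<sigma> v) - int v"] by simp
qed

lemma Fc_cons: "Fc l \<nu> (x # \<rho>) = (\<Sum>w<l. Fc l (\<lambda>v. if v = w then \<nu> v - int x else \<nu> v) \<rho>)"
  unfolding Fc_def pc.simps of_nat_sum sum_distrib_left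
  apply (subst sum.swap)
  apply (intro sum.cong refl arg_cong2[where f="(*)"] arg_cong[where f=int] arg_cong[where f="pc \<rho> l"])
  by auto

lemma Fc_snoc: "Fc l \<nu> (\<rho> @ [x]) = (\<Sum>w<l. Fc l (\<lambda>v. if v = w then \<nu> v - int x else \<nu> v) \<rho>)"
  unfolding Fc_def pc_snoc of_nat_sum sum_distrib_left
  apply (subst sum.swap)
  apply (intro sum.cong refl arg_cong2[where f="(*)"] arg_cong[where f=int] arg_cong[where f="pc \<rho> l"])
  by auto

lemma Fc_swap:
  assumes v: "v + 1 < l" and a1: "\<nu>' v = \<nu> (v+1) - 1" and a2: "\<nu>' (v+1) = \<nu> v + 1"
    and a3: "\<forall>u<l. u \<noteq> v \<longrightarrow> u \<noteq> v+1 \<longrightarrow> \<nu>' u = \<nu> u"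
  shows "Fc l \<nu>' \<rho> = - Fc l \<nu> \<rho>"
proof -
  define s where "s = Transposition.transpose v (v+1)"
  have sp: "s permutes {..<l}" unfolding s_def using v by (intro permutes_swap_id) auto
  have ss: "sign s = (-1::int)" unfolding s_def by (simp add: sign_swap_id)
  have "Fc l \<nu>' \<rho> = (\<Sum>\<sigma>\<in>{\<sigma>. \<sigma> permutes {..<l}}. sign (\<sigma> \<circ> s) * int (pc \<rho> l (\<lambda>u. \<nu>' u + int ((\<sigma> \<circ> s) u) - int u)))"
    unfolding Fc_def by (rule sum_permutations_compose_right[OF sp])
  also have "\<dots> = (\<Sum>\<sigma>\<in>{\<sigma>. \<sigma> permutes {..<l}}. - (sign \<sigma> * int (pc \<rho> l (\<lambda>u. \<nu> u + int (\<sigma> u) - int u))))"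
  proof (intro sum.cong refl)
    fix \<sigma> assume "\<sigma> \<in> {\<sigma>. \<sigma> permutes {..<l}}"
    then have sg: "\<sigma> permutes {..<l}" by simp
    have "sign (\<sigma> \<circ> s) = - sign \<sigma>"
      using sign_compose[OF permutes_imp_permutation[OF _ sg] permutes_imp_permutation[OF _ sp]] ss by simp
    moreover have "pc \<rho> l (\<lambda>u. \<nu>' u + int ((\<sigma> \<circ> s) u) - int u) = pc \<rho> l (\<lambda>u. (\<lambda>u. \<nu> u + int (\<sigma> u) - int u) (s u))"
    proof (rule pc_cong, intro allI impI)
      fix u assume "u < l"
      then show "\<nu>' u + int ((\<sigma> \<circ> s) u) - int u = \<nu> (s u) + int (\<sigma> (s u)) - int (s u)"
        using a1 a2 a3 unfolding s_def by (cases "u = v"; cases "u = v+1") (auto simp: Transposition.transpose_def)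
    qed
    moreover have "\<dots> = pc \<rho> l (\<lambda>u. \<nu> u + int (\<sigma> u) - int u)" by (rule pc_perm[OF sp])
    ultimately show "sign (\<sigma> \<circ> s) * int (pc \<rho> l (\<lambda>u. \<nu>' u + int ((\<sigma> \<circ> s) u) - int u)) =
        - (sign \<sigma> * int (pc \<rho> l (\<lambda>u. \<nu> u + int (\<sigma> u) - int u)))" by simp
  qed
  also have "\<dots> = - Fc l \<nu> \<rho>" unfolding Fc_def by (simp add: sum_negf)
  finally show ?thesis .
qed

lemma Fc_alt:
  assumes "v + 1 < l" "\<nu> (v+1) = \<nu> v + 1"
  shows "Fc l \<nu> \<rho> = 0"
proof -
  have "Fc l \<nu> \<rho> = - Fc l \<nu> \<rho>" by (rule Fc_swap[OF assms(1)]) (use assms in auto)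
  then show ?thesis by simp
qed

lemma Fc_Nil:
  assumes s0: "\<sigma>0 permutes {..<l}" and h: "\<forall>v<l. \<nu> v = int v - int (\<sigma>0 v)"
  shows "Fc l \<nu> [] = sign \<sigma>0"
proof -
  have "Fc l \<nu> [] = (\<Sum>\<sigma>\<in>{\<sigma>. \<sigma> permutes {..<l}}. if \<sigma> = \<sigma>0 then sign \<sigma> else 0)"
    unfolding Fc_def
  proof (intro sum.cong refl)
    fix \<sigma> assume "\<sigma> \<in> {\<sigma>. \<sigma> permutes {..<l}}"
    then have sg: "\<sigma> permutes {..<l}" by simp
    have "(\<forall>v<l. \<nu> v + int (\<sigma> v) - int v = 0) \<longleftrightarrow> \<sigma> = \<sigma>0"
    proof
      assume H: "\<forall>v<l. \<nu> v + int (\<sigma> v) - int v = 0"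
      show "\<sigma> = \<sigma>0"
      proof
        fix v show "\<sigma> v = \<sigma>0 v"
        proof (cases "v < l")
          case True then show ?thesis using H h by force
        next
          case False then show ?thesis using permutes_not_in[OF sg] permutes_not_in[OF s0] by auto
        qed
      qed
    next
      assume "\<sigma> = \<sigma>0" then show "\<forall>v<l. \<nu> v + int (\<sigma> v) - int v = 0" using h by auto
    qed
    then show "sign \<sigma> * int (pc [] l (\<lambda>v. \<nu> v + int (\<sigma> v) - int v)) = (if \<sigma> = \<sigma>0 then sign \<sigma> else 0)"
      by simp
  qed
  also have "\<dots> = sign \<sigma>0" using s0 by (simp add: sum.delta' finite_permutations)
  finally show ?thesis .
qed

lemma Fc_Nil_pos:
  assumes "0 < l" "\<nu> 0 > 0"
  shows "Fc l \<nu> [] = 0"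
  unfolding Fc_def using assms by (intro sum.neutral ballI) auto

lemma perm_ge_id:
  fixes \<sigma> :: "nat \<Rightarrow> nat"
  assumes sg: "\<sigma> permutes {..<l}" and ge: "\<forall>v<l. v \<le> \<sigma> v"
  shows "\<sigma> = id"
proof -
  have "sum \<sigma> {..<l} = sum id {..<l}"
    using sum.permute[OF sg, of id] by (simp add: o_def)
  moreover have "\<forall>v<l. \<sigma> v = v"
  proof (rule ccontr)
    assume "\<not> (\<forall>v<l. \<sigma> v = v)"
    then obtain v where "v < l" "\<sigma> v \<noteq> v" by auto
    then have "v < \<sigma> v" using ge by (simp add: order_le_neq_trans)
    then have "sum id {..<l} < sum \<sigma> {..<l}"
      using ge \<open>v < l\<close> by (intro sum_strict_mono_ex1) auto
    with calculation show False by simp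
  qed
  ultimately show ?thesis using permutes_not_in[OF sg] by (intro ext) (metis id_apply lessThan_iff)
qed

lemma Fc_zero_rows:
  assumes pos: "\<forall>x\<in>set \<rho>. 1 \<le> x" and l: "0 < l" and z: "\<forall>v. 0 < v \<and> v < l \<longrightarrow> \<nu> v = 0"
  shows "Fc l \<nu> \<rho> = (if \<nu> 0 = int (sum_list \<rho>) then 1 else 0)"
proof -
  have "Fc l \<nu> \<rho> = (\<Sum>\<sigma>\<in>{\<sigma>. \<sigma> permutes {..<l}}. if \<sigma> = id then int (pc \<rho> l \<nu>) else 0)"
    unfolding Fc_def
  proof (intro sum.cong refl)
    fix \<sigma> assume "\<sigma> \<in> {\<sigma>. \<sigma> permutes {..<l}}"
    then have sg: "\<sigma> permutes {..<l}" by simp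
    show "sign \<sigma> * int (pc \<rho> l (\<lambda>v. \<nu> v + int (\<sigma> v) - int v)) = (if \<sigma> = id then int (pc \<rho> l \<nu>) else 0)"
    proof (cases "\<sigma> = id")
      case True then show ?thesis by simp
    next
      case False
      then obtain v where v: "v < l" "\<sigma> v < v" using perm_ge_id[OF sg] by (meson not_le)
      then have "0 < v" by simp
      then have "pc \<rho> l (\<lambda>v. \<nu> v + int (\<sigma> v) - int v) = 0"
        using v z by (intro pc_neg[of v]) auto
      then show ?thesis using False by simp
    qed
  qed
  also have "\<dots> = int (pc \<rho> l \<nu>)" by (simp add: sum.delta' finite_permutations)
  also have "\<dots> = (if \<nu> 0 = int (sum_list \<rho>) then 1 else 0)"
    using pc_single[OF pos l z] by simp
  finally show ?thesis .
qed

definition nu :: "int \<Rightarrow> nat \<Rightarrow> nat \<Rightarrow> nat \<Rightarrow> int" where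
  "nu N k t v = (if v = 0 then N else if v \<le> t then 0 else if v = t+1 then - (int k - int t) else 1)"

lemma nu_val:
  assumes pos: "\<forall>x\<in>set \<rho>. 1 \<le> x"
  shows "t \<le> k \<Longrightarrow> Fc (Suc (Suc k)) (nu N k t) \<rho> = (-1)^(k-t) * (if N = int (sum_list \<rho>) then 1 else 0)"
proof (induction "k - t" arbitrary: t)
  case 0
  then have "t = k" by simp
  have "Fc (Suc (Suc k)) (nu N k t) \<rho> = (if nu N k t 0 = int (sum_list \<rho>) then 1 else 0)"
    by (rule Fc_zero_rows[OF pos]) (auto simp: nu_def \<open>t = k\<close>)
  moreover have "nu N k t 0 = N" by (simp add: nu_def)
  ultimately show ?case using \<open>t = k\<close> by simp
next
  case (Suc d)
  then have tk: "t < k" by simp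
  have "Fc (Suc (Suc k)) (nu N k (t+1)) \<rho> = - Fc (Suc (Suc k)) (nu N k t) \<rho>"
    by (rule Fc_swap[of "t+1"]) (use tk in \<open>auto simp: nu_def\<close>)
  moreover have "Fc (Suc (Suc k)) (nu N k (t+1)) \<rho> = (-1)^(k-(t+1)) * (if N = int (sum_list \<rho>) then 1 else 0)"
    using Suc.hyps(1)[of "t+1"] Suc.hyps(2) tk by simp
  moreover have "(-1::int)^(k-t) = - ((-1)^(k-(t+1)))"
    using tk by (metis Suc_diff_Suc Suc_eq_plus1 mult_minus1 power_Suc)
  ultimately show ?case by simp
qed

definition shpN :: "nat \<Rightarrow> nat \<Rightarrow> int \<Rightarrow> nat \<Rightarrow> int" where
  "shpN i k N v = (if v = 0 then N else if v = 1 then int i - int k else 1)"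

lemma part1_core:
  assumes k: "1 \<le> k" "k < i" and S: "\<forall>x\<in>set S. 1 \<le> x"
  shows "\<forall>x\<in>set R. i \<le> x \<Longrightarrow> int (sum_list S) + int (sum_list R) = N + int i \<Longrightarrow>
    Fc (Suc (Suc k)) (shpN i k N) (S @ R) = Fc (Suc (Suc k)) (shpN i k (N - int (sum_list R))) S + (-1)^k * int (count_list R i)"
proof (induction R arbitrary: N rule: rev_induct)
  case Nil then show ?case by simp
next
  case (snoc x R)
  have xi: "i \<le> x" using snoc.prems by simp
  define g where "g = (\<lambda>w. Fc (Suc (Suc k)) (\<lambda>v. if v = w then shpN i k N v - int x else shpN i k N v) (S @ R))"
  have "Fc (Suc (Suc k)) (shpN i k N) (S @ R @ [x]) = (\<Sum>w<Suc (Suc k). g w)"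
    unfolding g_def append_assoc[symmetric] Fc_snoc ..
  also have "\<dots> = g 0 + g 1 + (\<Sum>w<k. g (Suc (Suc w)))"
    unfolding sum.lessThan_Suc_shift by (simp add: add.assoc)
  also have "(\<Sum>w<k. g (Suc (Suc w))) = 0"
  proof (intro sum.neutral ballI)
    fix w assume "w \<in> {..<k}"
    then show "g (Suc (Suc w)) = 0" unfolding g_def
      by (intro Fc_neg[of "Suc (Suc w)"]) (use xi k in \<open>auto simp: shpN_def\<close>)
  qed
  also have "g 0 = Fc (Suc (Suc k)) (shpN i k (N - int x)) (S @ R)"
    unfolding g_def by (intro Fc_cong) (auto simp: shpN_def)
  also have "\<dots> = Fc (Suc (Suc k)) (shpN i k (N - int x - int (sum_list R))) S + (-1)^k * int (count_list R i)"
    by (rule snoc.IH) (use snoc.prems in auto)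
  also have "g 1 = (-1)^k * (if x = i then 1 else 0)"
  proof (cases "x = i")
    case True
    have g1: "g 1 = Fc (Suc (Suc k)) (nu N k 0) (S @ R)"
      unfolding g_def by (intro Fc_cong) (auto simp: shpN_def nu_def True)
    have p: "\<forall>x\<in>set (S @ R). 1 \<le> x" using S snoc.prems k by force
    have "Fc (Suc (Suc k)) (nu N k 0) (S @ R) = (-1)^k" using nu_val[OF p, of 0 k N] snoc.prems True by simp
    then show ?thesis using True g1 by simp
  next
    case False
    then have "x > i" using xi by simp
    then have "g 1 = 0" unfolding g_def
      by (intro Fc_neg[of 1]) (auto simp: shpN_def)
    then show ?thesis using False by simp
  qed
  finally show ?case by (simp add: algebra_simps)
qed

lemma sum_list_cl: "sum_list (concat (map (\<lambda>j. replicate (a j) j) xs)) = (\<Sum>j\<leftarrow>xs. a j * j)"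
  by (induction xs) (auto simp: sum_list_replicate)

lemma cycle_list_sum:
  assumes "cycle_type n a" shows "sum_list (cycle_list n a) = n"
proof -
  have "sum_list (cycle_list n a) = (\<Sum>j\<leftarrow>[1..<Suc n]. a j * j)"
    unfolding cycle_list_def sum_list_cl ..
  also have "\<dots> = (\<Sum>j\<in>set [1..<Suc n]. a j * j)"
    by (rule sum_set_upt_conv_sum_list_nat[symmetric])
  also have "set [1..<Suc n] = {1..n}" by auto
  also have "(\<Sum>j\<in>{1..n}. a j * j) = n" using assms unfolding cycle_type_def by (simp add: mult.commute)
  finally show ?thesis .
qed

lemma cycle_list_split:
  assumes "1 \<le> i" "i \<le> n"
  shows "cycle_list n a = concat (map (\<lambda>j. replicate (a j) j) [1..<i]) @ concat (map (\<lambda>j. replicate (a j) j) [i..<Suc n])"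
proof -
  have "[1..<Suc n] = [1..<i] @ [i..<Suc n]"
    using assms upt_add_eq_append[of 1 i "Suc n - i"] by simp
  then show ?thesis unfolding cycle_list_def by simp
qed

lemma count_big:
  assumes "i \<le> n"
  shows "count_list (concat (map (\<lambda>j. replicate (a j) j) [i..<Suc n])) i = a i"
proof -
  have "[i..<Suc n] = i # [Suc i..<Suc n]" using assms by (simp add: upt_conv_Cons)
  moreover have "count_list (replicate m i) i = m" for m by (induction m) auto
  moreover have "count_list (concat (map (\<lambda>j. replicate (a j) j) [Suc i..<Suc n])) i = 0"
    by (rule count_notin) auto
  ultimately show ?thesis by simp
qed

lemma hook2_nth:
  assumes "v < Suc (Suc k)" "k < i" "i \<le> n"
  shows "int (hook2 n i k ! v) = shpN i k (int n - int i) v"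
proof -
  consider "v = 0" | "v = 1" | w where "v = Suc (Suc w)" "w < k"
    using assms(1) by (metis One_nat_def less_Suc_eq_0_disj Suc_less_SucD)
  then show ?thesis
    by cases (use assms in \<open>auto simp: hook2_def shpN_def\<close>)
qed

lemma length_hook2: "length (hook2 n i k) = Suc (Suc k)" by (simp add: hook2_def)

lemma part1:
  fixes n i k :: nat and a b :: "nat \<Rightarrow> nat"
  assumes "1 \<le> k" and "k < i" and "i - k \<le> n - i"
    and ca: "cycle_type n a" and cb: "cycle_type n b"
    and ab: "\<forall>j. 1 \<le> j \<and> j < i \<longrightarrow> a j = b j"
  shows "character (hook2 n i k) n a - character (hook2 n i k) n b = (-1) ^ k * (int (a i) - int (b i))"
proof -
  have i1: "1 \<le> i" "i \<le> n" using assms by auto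
  define S where "S = concat (map (\<lambda>j. replicate (a j) j) [1..<i])"
  define Ra where "Ra = concat (map (\<lambda>j. replicate (a j) j) [i..<Suc n])"
  define Rb where "Rb = concat (map (\<lambda>j. replicate (b j) j) [i..<Suc n])"
  have Sb: "S = concat (map (\<lambda>j. replicate (b j) j) [1..<i])"
    unfolding S_def by (intro arg_cong[where f=concat] map_cong refl) (use ab in auto)
  have cla: "cycle_list n a = S @ Ra" unfolding S_def Ra_def by (rule cycle_list_split[OF i1])
  have clb: "cycle_list n b = S @ Rb" unfolding Sb Rb_def by (rule cycle_list_split[OF i1])
  have sa: "sum_list S + sum_list Ra = n" using cycle_list_sum[OF ca] cla by simp
  have sb: "sum_list S + sum_list Rb = n" using cycle_list_sum[OF cb] clb by simp
  have Spos: "\<forall>x\<in>set S. 1 \<le> x" unfolding S_def by auto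
  have chr: "character (hook2 n i k) n c = Fc (Suc (Suc k)) (shpN i k (int n - int i)) (cycle_list n c)" for c
    unfolding character_Fc length_hook2 using hook2_nth assms by (intro Fc_cong) auto
  have A: "character (hook2 n i k) n a = Fc (Suc (Suc k)) (shpN i k (int n - int i - int (sum_list Ra))) S + (-1)^k * int (a i)"
    unfolding chr cla using part1_core[OF assms(1,2) Spos, of Ra "int n - int i"] sa count_big[OF i1(2), of a]
    unfolding Ra_def by auto
  have B: "character (hook2 n i k) n b = Fc (Suc (Suc k)) (shpN i k (int n - int i - int (sum_list Rb))) S + (-1)^k * int (b i)"
    unfolding chr clb using part1_core[OF assms(1,2) Spos, of Rb "int n - int i"] sb count_big[OF i1(2), of b]
    unfolding Rb_def by auto
  have "sum_list Ra = sum_list Rb" using sa sb by simp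
  then show ?thesis unfolding A B by (simp add: algebra_simps)
qed

definition Dv :: "nat \<Rightarrow> nat \<Rightarrow> nat \<Rightarrow> real" where
  "Dv a b j = real ((a+b+j) choose (b+j)) * real ((b+j-1) choose j) * (real a - real b + 1) / (real a + real j + 1)"

definition cc :: "real \<Rightarrow> real \<Rightarrow> real \<Rightarrow> real" where
  "cc A B J = A * (A - 1) + B * (B - 3) - (J + 1) * (J + 2) + 2"

definition Tv :: "nat \<Rightarrow> nat \<Rightarrow> nat \<Rightarrow> real" where
  "Tv a b j = Dv a b j * cc (real a) (real b) (real j) / (real (a+b+j) * (real (a+b+j) - 1))"

lemma rel1: "0 < p \<Longrightarrow> real p * real (n choose p) = real n * real ((n-1) choose (p-1))"
  using times_binomial_minus1_eq[of p n] by (metis of_nat_mult)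

lemma rel2: "real (n - p) * real (n choose p) = real n * real ((n-1) choose p)"
  using binomial_absorb_comp[of n p] by (metis of_nat_mult)

lemma ratD:
  fixes A B J N Pm Q Qp X U :: real
  assumes N: "N = A+B+J" and P: "Pm = B+J-1" and Q: "Q = A+J" and Qp: "Qp = A+J+1"
    and nz: "Q \<noteq> 0" "Qp \<noteq> 0" "N \<noteq> 0" "Pm \<noteq> 0"
  shows "X*U*(A-B+1)/Qp = (A*X/N)*U*(A-B)/Q + ((B+J)*X/N)*((B-1)*U/Pm)*(A-B+2)/Qp
      + ((B+J)*X/N)*(J*U/Pm)*(A-B+1)/Q"
  using nz apply (simp add: field_simps)
  unfolding N P Q Qp by algebra

lemma ratD0:
  fixes A B N Qp X :: real
  assumes N: "N = A+B" and Qp: "Qp = A+1" and nz: "A \<noteq> 0" "Qp \<noteq> 0" "N \<noteq> 0"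
  shows "X*(A-B+1)/Qp = (A*X/N)*(A-B)/A + (B*X/N)*(A-B+2)/Qp"
  using nz apply (simp add: field_simps)
  unfolding N Qp by algebra

lemma ratK:
  fixes A B J N Pm Q Qp X U :: real
  assumes N: "N = A+B+J" and P: "Pm = B+J-1" and Q: "Q = A+J" and Qp: "Qp = A+J+1"
    and nz: "Q \<noteq> 0" "Qp \<noteq> 0" "N \<noteq> 0" "Pm \<noteq> 0"
  shows "(A*X/N)*U*(A-B)/Q * (A-1)
    + ((B+J)*X/N)*((B-1)*U/Pm)*(A-B+2)/Qp * (B-2)
    - ((B+J)*X/N)*(J*U/Pm)*(A-B+1)/Q * (J+1) = cc A B J * (X*U*(A-B+1)/Qp) / N"
  using nz unfolding cc_def apply (simp add: field_simps)
  unfolding N P Q Qp by algebra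

lemma ratK0:
  fixes A B N Qp X :: real
  assumes N: "N = A+B" and Qp: "Qp = A+1" and nz: "A \<noteq> 0" "Qp \<noteq> 0" "N \<noteq> 0"
  shows "(A*X/N)*(A-B)/A * (A-1) + (B*X/N)*(A-B+2)/Qp * (B-2) = cc A B 0 * (X*(A-B+1)/Qp) / N"
  using nz unfolding cc_def apply (simp add: field_simps)
  unfolding N Qp by algebra

lemma aux_cancel: "(M2::real) \<noteq> 0 \<Longrightarrow> N \<noteq> 0 \<Longrightarrow> M1 \<noteq> 0 \<Longrightarrow> (x*M2/N)/(M1*M2) = x/(N*M1)"
  by (simp add: field_simps)

lemma linT:
  fixes D D0 D1 D2 C A B J N :: real
  assumes s: "D = D0 + D1 + D2" and k: "D0*(A-1) + D1*(B-2) - D2*(J+1) = C*D/N"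
    and nz: "N \<noteq> 0" "N - 1 \<noteq> 0" "N - 2 \<noteq> 0"
  shows "D*C/(N*(N-1)) = D0*(C - 2*(A-1))/((N-1)*(N-2)) + D1*(C - 2*(B-2))/((N-1)*(N-2))
    + D2*(C + 2*(J+1))/((N-1)*(N-2))"
proof -
  have "D0*(C - 2*(A-1)) + D1*(C - 2*(B-2)) + D2*(C + 2*(J+1)) = C*(D0+D1+D2) - 2*(D0*(A-1) + D1*(B-2) - D2*(J+1))"
    by (simp add: algebra_simps)
  also have "\<dots> = C*D*(N-2)/N" unfolding k s[symmetric] using nz by (simp add: field_simps)
  finally have e: "D0*(C - 2*(A-1)) + D1*(C - 2*(B-2)) + D2*(C + 2*(J+1)) = C*D*(N-2)/N" .
  have "D0*(C - 2*(A-1))/((N-1)*(N-2)) + D1*(C - 2*(B-2))/((N-1)*(N-2)) + D2*(C + 2*(J+1))/((N-1)*(N-2))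
     = (D0*(C - 2*(A-1)) + D1*(C - 2*(B-2)) + D2*(C + 2*(J+1)))/((N-1)*(N-2))"
    by (simp add: add_divide_distrib)
  also have "\<dots> = D*C/(N*(N-1))" unfolding e using aux_cancel[of "N-2" N "N-1" "C*D"] nz by (simp add: mult.commute)
  finally show ?thesis by simp
qed

lemma cc_shift: "cc (A-1) B J = cc A B J - 2*(A-1)" "cc A (B-1) J = cc A B J - 2*(B-2)"
  "cc A B (J-1) = cc A B J + 2*(J+1)"
  unfolding cc_def by (simp_all add: algebra_simps)

lemma Dforms:
  assumes a1: "1 \<le> a" and b1: "1 \<le> b" and j1: "1 \<le> j"
  shows "\<exists>X U. Dv a b j = X * U * (real a - real b + 1) / (real a + real j + 1)
     \<and> Dv (a-1) b j = (real a * X / real (a+b+j)) * U * (real a - real b) / (real a + real j)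
     \<and> Dv a (b-1) j = ((real b + real j) * X / real (a+b+j)) * ((real b - 1) * U / (real b + real j - 1)) * (real a - real b + 2) / (real a + real j + 1)
     \<and> Dv a b (j-1) = ((real b + real j) * X / real (a+b+j)) * (real j * U / (real b + real j - 1)) * (real a - real b + 1) / (real a + real j)"
proof -
  define n where "n = a + b + j"
  define p where "p = b + j"
  define X where "X = real (n choose p)"
  define Y where "Y = real ((n-1) choose p)"
  define Z where "Z = real ((n-1) choose (p-1))"
  define U where "U = real ((p-1) choose j)"
  define V where "V = real ((p-2) choose j)"
  define W where "W = real ((p-2) choose (j-1))"
  have np: "n - p = a" "0 < p" "0 < n" unfolding n_def p_def using a1 b1 by auto
  have r1: "real p * X = real n * Z" unfolding X_def Z_def by (rule rel1[OF np(2)])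
  have r2: "real a * X = real n * Y" unfolding X_def Y_def using rel2[of n p] np by simp
  have r3: "real j * U = real (p-1) * W" unfolding U_def W_def
    using rel1[of j "p-1"] j1 by (simp add: numeral_2_eq_2 diff_diff_add)
  have r4: "real (b-1) * U = real (p-1) * V" unfolding U_def V_def
    using rel2[of "p-1" j] j1 unfolding p_def by (simp add: numeral_2_eq_2 diff_diff_add)
  have e0: "Dv a b j = X * U * (real a - real b + 1) / (real a + real j + 1)"
    unfolding Dv_def X_def U_def n_def p_def ..
  have e1: "Dv (a-1) b j = Y * U * (real a - real b) / (real a + real j)"
    unfolding Dv_def Y_def U_def n_def p_def using a1 by (simp add: algebra_simps)
  have e2: "Dv a (b-1) j = Z * V * (real a - real b + 2) / (real a + real j + 1)"
    unfolding Dv_def Z_def V_def n_def p_def using b1 by (simp add: algebra_simps numeral_2_eq_2)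
  have e3: "Dv a b (j-1) = Z * W * (real a - real b + 1) / (real a + real j)"
    unfolding Dv_def Z_def W_def n_def p_def using j1 by (simp add: algebra_simps numeral_2_eq_2)
  have pp: "real p = real b + real j" "real n = real a + real b + real j" unfolding p_def n_def by auto
  have pos: "real n > 0" "real (p - 1) > 0"
    using a1 j1 b1 np by (auto simp: p_def)
  have p1': "real (p-1) = real b + real j - 1" using np pp by simp
  have Y': "Y = real a * X / real n" using r2 pos by (simp add: field_simps)
  have Z': "Z = (real b + real j) * X / real n" using r1 pos pp by (simp add: field_simps)
  have W': "W = real j * U / (real b + real j - 1)" using r3 pos p1' by (simp add: field_simps)
  have V': "V = (real b - 1) * U / (real b + real j - 1)" using r4 pos p1' b1 by (simp add: field_simps)
  show ?thesis unfolding n_def[symmetric] using e0 e1 e2 e3 unfolding Y' Z' W' V' by blast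
qed

lemma Dforms0:
  assumes a1: "1 \<le> a" and b1: "1 \<le> b"
  shows "\<exists>X. Dv a b 0 = X * (real a - real b + 1) / (real a + 1)
     \<and> Dv (a-1) b 0 = (real a * X / real (a+b)) * (real a - real b) / real a
     \<and> Dv a (b-1) 0 = (real b * X / real (a+b)) * (real a - real b + 2) / (real a + 1)"
proof -
  define n where "n = a + b"
  define X where "X = real (n choose b)"
  define Y where "Y = real ((n-1) choose b)"
  define Z where "Z = real ((n-1) choose (b-1))"
  have np: "n - b = a" "0 < b" "0 < n" unfolding n_def using a1 b1 by auto
  have r1: "real b * X = real n * Z" unfolding X_def Z_def by (rule rel1[OF np(2)])
  have r2: "real a * X = real n * Y" unfolding X_def Y_def using rel2[of n b] np by simp
  have e0: "Dv a b 0 = X * (real a - real b + 1) / (real a + 1)"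
    unfolding Dv_def X_def n_def by simp
  have e1: "Dv (a-1) b 0 = Y * (real a - real b) / real a"
    unfolding Dv_def Y_def n_def using a1 by (simp add: algebra_simps)
  have e2: "Dv a (b-1) 0 = Z * (real a - real b + 2) / (real a + 1)"
    unfolding Dv_def Z_def n_def using b1 by (simp add: algebra_simps)
  have pos: "real n > 0" using np by simp
  have Y': "Y = real a * X / real n" using r2 pos by (simp add: field_simps)
  have Z': "Z = real b * X / real n" using r1 pos by (simp add: field_simps)
  show ?thesis unfolding n_def[symmetric] using e0 e1 e2 unfolding Y' Z' by blast
qed

lemma Dv_b0: "Dv a 0 0 = 1"
  unfolding Dv_def by (simp add: add_pos_nonneg)

lemma D_rec:
  assumes a1: "1 \<le> a" and ab: "b \<le> a" and V: "1 \<le> b \<or> j = 0"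
  shows "Dv a b j = Dv (a-1) b j + (if 1 \<le> b then Dv a (b-1) j else 0) + (if 1 \<le> j then Dv a b (j-1) else 0)"
proof (cases "b = 0")
  case True
  then have "j = 0" using V by simp
  then show ?thesis using True by (simp add: Dv_b0)
next
  case False
  then have b1: "1 \<le> b" by simp
  show ?thesis
  proof (cases "j = 0")
    case True
    obtain X where h: "Dv a b 0 = X * (real a - real b + 1) / (real a + 1)"
     "Dv (a-1) b 0 = (real a * X / real (a+b)) * (real a - real b) / real a"
     "Dv a (b-1) 0 = (real b * X / real (a+b)) * (real a - real b + 2) / (real a + 1)"
      using Dforms0[OF a1 b1] by blast
    have "Dv a b 0 = Dv (a-1) b 0 + Dv a (b-1) 0" unfolding h
      by (rule ratD0[where N="real (a+b)" and Qp="real a + 1"]) (use a1 in auto)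
    then show ?thesis using True b1 by simp
  next
    case False
    then have j1: "1 \<le> j" by simp
    obtain X U where h: "Dv a b j = X * U * (real a - real b + 1) / (real a + real j + 1)"
     "Dv (a-1) b j = (real a * X / real (a+b+j)) * U * (real a - real b) / (real a + real j)"
     "Dv a (b-1) j = ((real b + real j) * X / real (a+b+j)) * ((real b - 1) * U / (real b + real j - 1)) * (real a - real b + 2) / (real a + real j + 1)"
     "Dv a b (j-1) = ((real b + real j) * X / real (a+b+j)) * (real j * U / (real b + real j - 1)) * (real a - real b + 1) / (real a + real j)"
      using Dforms[OF a1 b1 j1] by blast
    have "Dv a b j = Dv (a-1) b j + Dv a (b-1) j + Dv a b (j-1)" unfolding h
      by (rule ratD[where N="real (a+b+j)" and Pm="real b + real j - 1" and Q="real a + real j" and Qp="real a + real j + 1"])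
        (use a1 b1 j1 in auto)
    then show ?thesis using j1 b1 by simp
  qed
qed

lemma T_rec:
  assumes a1: "1 \<le> a" and ab: "b \<le> a" and V: "1 \<le> b \<or> j = 0" and n3: "3 \<le> a + b + j"
  shows "Tv a b j = Tv (a-1) b j + (if 1 \<le> b then Tv a (b-1) j else 0) + (if 1 \<le> j then Tv a b (j-1) else 0)"
proof (cases "b = 0")
  case True
  then have j0: "j = 0" using V by simp
  have a3: "real a \<ge> 3" using n3 True j0 by simp
  have "Tv a 0 0 = 1" unfolding Tv_def cc_def Dv_b0 using a3 by (simp add: field_simps)
  moreover have "Tv (a-1) 0 0 = 1"
  proof -
    have h2: "real (a-1) \<ge> 2" using a3 a1 by (simp add: of_nat_diff)
    have "real (a-1) * (real (a-1) - 1) > 0" using h2 by (intro mult_pos_pos) auto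
    then have nz: "real (a-1) * (real (a-1) - 1) \<noteq> 0" by linarith
    then show ?thesis unfolding Tv_def cc_def Dv_b0 by (simp; arith)
  qed
  ultimately show ?thesis using True j0 by simp
next
  case False
  then have b1: "1 \<le> b" by simp
  define N where "N = real (a+b+j)"
  have N3: "N \<ge> 3" unfolding N_def using n3 by linarith
  define D0 where "D0 = Dv (a-1) b j"
  define D1 where "D1 = (if 1 \<le> b then Dv a (b-1) j else 0)"
  define D2 where "D2 = (if 1 \<le> j then Dv a b (j-1) else 0)"
  have s: "Dv a b j = D0 + D1 + D2" unfolding D0_def D1_def D2_def by (rule D_rec[OF a1 ab V])
  have k: "D0*(real a-1) + D1*(real b-2) - D2*(real j+1) = cc (real a) (real b) (real j) * Dv a b j / N"
  proof (cases "j = 0")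
    case True
    obtain X where h: "Dv a b 0 = X * (real a - real b + 1) / (real a + 1)"
     "Dv (a-1) b 0 = (real a * X / real (a+b)) * (real a - real b) / real a"
     "Dv a (b-1) 0 = (real b * X / real (a+b)) * (real a - real b + 2) / (real a + 1)"
      using Dforms0[OF a1 b1] by blast
    have NN: "N = real (a+b)" unfolding N_def True by simp
    have "(real a * X / real (a+b)) * (real a - real b) / real a * (real a - 1)
       + (real b * X / real (a+b)) * (real a - real b + 2) / (real a + 1) * (real b - 2)
       = cc (real a) (real b) 0 * (X * (real a - real b + 1) / (real a + 1)) / real (a+b)"
      by (rule ratK0) (use a1 in auto)
    then show ?thesis unfolding D0_def D1_def D2_def True NN using b1 h by simp
  next
    case False
    then have j1: "1 \<le> j" by simp
    obtain X U where h: "Dv a b j = X * U * (real a - real b + 1) / (real a + real j + 1)"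
     "Dv (a-1) b j = (real a * X / real (a+b+j)) * U * (real a - real b) / (real a + real j)"
     "Dv a (b-1) j = ((real b + real j) * X / real (a+b+j)) * ((real b - 1) * U / (real b + real j - 1)) * (real a - real b + 2) / (real a + real j + 1)"
     "Dv a b (j-1) = ((real b + real j) * X / real (a+b+j)) * (real j * U / (real b + real j - 1)) * (real a - real b + 1) / (real a + real j)"
      using Dforms[OF a1 b1 j1] by blast
    have "(real a * X / real (a+b+j)) * U * (real a - real b) / (real a + real j) * (real a - 1)
      + ((real b + real j) * X / real (a+b+j)) * ((real b - 1) * U / (real b + real j - 1)) * (real a - real b + 2) / (real a + real j + 1) * (real b - 2)
      - ((real b + real j) * X / real (a+b+j)) * (real j * U / (real b + real j - 1)) * (real a - real b + 1) / (real a + real j) * (real j + 1)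
      = cc (real a) (real b) (real j) * (X * U * (real a - real b + 1) / (real a + real j + 1)) / real (a+b+j)"
      by (rule ratK[where Pm="real b + real j - 1" and Q="real a + real j" and Qp="real a + real j + 1"])
         (use a1 b1 j1 in auto)
    then show ?thesis unfolding D0_def D1_def D2_def N_def using b1 j1 h by simp
  qed
  have t0: "Tv a b j = Dv a b j * cc (real a) (real b) (real j) / (N * (N - 1))"
    unfolding Tv_def N_def ..
  have t1: "Tv (a-1) b j = D0 * (cc (real a) (real b) (real j) - 2*(real a - 1)) / ((N - 1) * (N - 2))"
    unfolding Tv_def N_def D0_def cc_shift(1)[symmetric] using a1 by (simp add: algebra_simps)
  have t2: "(if 1 \<le> b then Tv a (b-1) j else 0) = D1 * (cc (real a) (real b) (real j) - 2*(real b - 2)) / ((N - 1) * (N - 2))"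
    unfolding Tv_def N_def D1_def cc_shift(2)[symmetric] using b1 by (simp add: algebra_simps)
  have t3: "(if 1 \<le> j then Tv a b (j-1) else 0) = D2 * (cc (real a) (real b) (real j) + 2*(real j + 1)) / ((N - 1) * (N - 2))"
    unfolding Tv_def N_def D2_def cc_shift(3)[symmetric] by (simp add: algebra_simps)
  show ?thesis unfolding t0 t1 t2 t3
    by (rule linT[OF s k]) (use N3 in auto)
qed

definition shp :: "nat \<Rightarrow> nat \<Rightarrow> nat \<Rightarrow> nat \<Rightarrow> int" where
  "shp a b j v = (if v = 0 then int a else if v = 1 then int b else if v \<le> j + 1 then 1 else 0)"

lemma branch:
  assumes k1: "1 \<le> k" and jk: "j \<le> k" and a1: "1 \<le> a" and V: "1 \<le> b \<or> j = 0"
  shows "Fc (Suc (Suc k)) (shp a b j) (1 # \<rho>) = Fc (Suc (Suc k)) (shp (a-1) b j) \<rho>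
     + (if 1 \<le> b then Fc (Suc (Suc k)) (shp a (b-1) j) \<rho> else 0)
     + (if 1 \<le> j then Fc (Suc (Suc k)) (shp a b (j-1)) \<rho> else 0)"
proof -
  define g where "g = (\<lambda>w. Fc (Suc (Suc k)) (\<lambda>v. if v = w then shp a b j v - int 1 else shp a b j v) \<rho>)"
  have "Fc (Suc (Suc k)) (shp a b j) (1 # \<rho>) = (\<Sum>w<Suc (Suc k). g w)"
    unfolding g_def Fc_cons ..
  also have "\<dots> = g 0 + g 1 + (\<Sum>w<k. g (Suc (Suc w)))"
    unfolding sum.lessThan_Suc_shift by (simp add: add.assoc)
  also have "g 0 = Fc (Suc (Suc k)) (shp (a-1) b j) \<rho>"
    unfolding g_def by (intro Fc_cong) (use a1 in \<open>auto simp: shp_def\<close>)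
  also have "g 1 = (if 1 \<le> b then Fc (Suc (Suc k)) (shp a (b-1) j) \<rho> else 0)"
  proof (cases "1 \<le> b")
    case True
    then show ?thesis unfolding g_def by (simp only: if_True) (intro Fc_cong, auto simp: shp_def)
  next
    case False
    have "g 1 = 0" unfolding g_def
      by (rule Fc_alt[of 1]) (use False k1 V in \<open>auto simp: shp_def\<close>)
    then show ?thesis using False by simp
  qed
  also have "(\<Sum>w<k. g (Suc (Suc w))) = (\<Sum>w<k. if w = j - 1 then (if 1 \<le> j then Fc (Suc (Suc k)) (shp a b (j-1)) \<rho> else 0) else 0)"
  proof (intro sum.cong refl)
    fix w assume w: "w \<in> {..<k}"
    consider "Suc w = j" | "Suc w < j" | "Suc w > j" by linarith
    then show "g (Suc (Suc w)) = (if w = j - 1 then (if 1 \<le> j then Fc (Suc (Suc k)) (shp a b (j-1)) \<rho> else 0) else 0)"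
    proof cases
      case 1
      then have "w = j - 1" "1 \<le> j" by auto
      then have rhs: "(if w = j - 1 then (if 1 \<le> j then Fc (Suc (Suc k)) (shp a b (j-1)) \<rho> else 0) else 0)
          = Fc (Suc (Suc k)) (shp a b (j-1)) \<rho>" by simp
      show ?thesis unfolding rhs g_def by (intro Fc_cong) (use 1 in \<open>auto simp: shp_def\<close>)
    next
      case 2
      have "g (Suc (Suc w)) = 0" unfolding g_def
        by (rule Fc_alt[of "Suc (Suc w)"]) (use 2 jk in \<open>auto simp: shp_def\<close>)
      moreover have "w \<noteq> j - 1" using 2 by arith
      ultimately show ?thesis by simp
    next
      case 3
      have "g (Suc (Suc w)) = 0"
      proof (cases "Suc (Suc (Suc w)) < Suc (Suc k)")
        case True
        show ?thesis unfolding g_def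
          by (rule Fc_alt[of "Suc (Suc w)"]) (use 3 True in \<open>auto simp: shp_def\<close>)
      next
        case False
        then have "w = k - 1" using w by simp
        then show ?thesis unfolding g_def
          by (intro Fc_neg[of "Suc (Suc w)"]) (use 3 w in \<open>auto simp: shp_def\<close>)
      qed
      moreover have "w \<noteq> j - 1 \<or> j = 0" using 3 by arith
      ultimately show ?thesis by auto
    qed
  qed
  also have "\<dots> = (if 1 \<le> j then Fc (Suc (Suc k)) (shp a b (j-1)) \<rho> else 0)"
  proof (cases "1 \<le> j")
    case True
    then have "j - 1 \<in> {..<k}" using jk by auto
    then show ?thesis using True by (simp add: sum.delta)
  qed simp
  finally show ?thesis .
qed

lemma zero1: "1 \<le> b \<Longrightarrow> Fc (Suc (Suc k)) (shp (b-1) b j) \<rho> = 0"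
  by (rule Fc_alt[of 0]) (auto simp: shp_def)

lemma zero2: "1 \<le> k \<Longrightarrow> 1 \<le> j \<Longrightarrow> Fc (Suc (Suc k)) (shp a 0 j) \<rho> = 0"
  by (rule Fc_alt[of 1]) (auto simp: shp_def)

lemma Dv_zero1: "1 \<le> b \<Longrightarrow> Dv (b-1) b j = 0"
  unfolding Dv_def by (simp add: of_nat_diff)

lemma Dv_zero2: "1 \<le> j \<Longrightarrow> Dv a 0 j = 0"
  unfolding Dv_def by simp

lemma Dlem:
  assumes k1: "1 \<le> k"
  shows "j \<le> k \<Longrightarrow> b \<le> a \<Longrightarrow> (1 \<le> b \<or> j = 0) \<Longrightarrow>
    real_of_int (Fc (Suc (Suc k)) (shp a b j) (replicate (a+b+j) 1)) = Dv a b j"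
proof (induction "a+b+j" arbitrary: a b j)
  case 0
  then have z: "a = 0" "b = 0" "j = 0" by auto
  have "Fc (Suc (Suc k)) (shp 0 0 0) [] = sign (id::nat\<Rightarrow>nat)" by (rule Fc_Nil) (auto simp: shp_def)
  then show ?case using z Dv_b0[of 0] by simp
next
  case (Suc m)
  have a1: "1 \<le> a" using Suc.hyps(2) Suc.prems by (cases a) auto
  have rep: "replicate (a+b+j) (1::nat) = 1 # replicate m 1" using Suc.hyps(2)[symmetric] by simp
  define L where "L = Suc (Suc k)"
  have T0: "real_of_int (Fc L (shp (a-1) b j) (replicate m 1)) = Dv (a-1) b j"
  proof (cases "b \<le> a - 1")
    case True
    have mm: "a - 1 + b + j = m" using Suc.hyps(2) a1 by simp
    have "real_of_int (Fc (Suc (Suc k)) (shp (a-1) b j) (replicate (a-1+b+j) 1)) = Dv (a-1) b j"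
      by (rule Suc.hyps(1)) (use mm Suc.prems True in auto)
    then show ?thesis unfolding L_def mm .
  next
    case False
    then have "a = b" "1 \<le> b" using Suc.prems a1 by auto
    then show ?thesis unfolding L_def using zero1[of b k j] Dv_zero1[of b j] by simp
  qed
  have T1: "1 \<le> b \<Longrightarrow> real_of_int (Fc L (shp a (b-1) j) (replicate m 1)) = Dv a (b-1) j"
  proof -
    assume b1: "1 \<le> b"
    show ?thesis
    proof (cases "2 \<le> b \<or> j = 0")
      case True
      have mm: "a + (b - 1) + j = m" using Suc.hyps(2) b1 by simp
      have "real_of_int (Fc (Suc (Suc k)) (shp a (b-1) j) (replicate (a+(b-1)+j) 1)) = Dv a (b-1) j"
        by (rule Suc.hyps(1)) (use mm Suc.prems True in auto)
      then show ?thesis unfolding L_def mm .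
    next
      case False
      then have "b = 1" "1 \<le> j" using b1 by auto
      then show ?thesis unfolding L_def using zero2[OF k1, of j a] Dv_zero2[of j a] by simp
    qed
  qed
  have T2: "1 \<le> j \<Longrightarrow> real_of_int (Fc L (shp a b (j-1)) (replicate m 1)) = Dv a b (j-1)"
  proof -
    assume j1: "1 \<le> j"
    have mm: "a + b + (j - 1) = m" using Suc.hyps(2) j1 by simp
    have "real_of_int (Fc (Suc (Suc k)) (shp a b (j-1)) (replicate (a+b+(j-1)) 1)) = Dv a b (j-1)"
      by (rule Suc.hyps(1)) (use mm Suc.prems j1 in auto)
    then show ?thesis unfolding L_def mm .
  qed
  have "Fc L (shp a b j) (replicate (a+b+j) 1) = Fc L (shp (a-1) b j) (replicate m 1)
     + (if 1 \<le> b then Fc L (shp a (b-1) j) (replicate m 1) else 0)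
     + (if 1 \<le> j then Fc L (shp a b (j-1)) (replicate m 1) else 0)"
    unfolding rep L_def by (rule branch[OF k1 Suc.prems(1) a1 Suc.prems(3)])
  then have "real_of_int (Fc L (shp a b j) (replicate (a+b+j) 1)) = Dv (a-1) b j
     + (if 1 \<le> b then Dv a (b-1) j else 0) + (if 1 \<le> j then Dv a b (j-1) else 0)"
    using T0 T1 T2 by simp
  also have "\<dots> = Dv a b j" using D_rec[OF a1 Suc.prems(2,3)] by simp
  finally show ?case unfolding L_def .
qed

lemma Tv_zero1: "1 \<le> b \<Longrightarrow> Tv (b-1) b j = 0"
  unfolding Tv_def using Dv_zero1 by simp

lemma Tv_zero2: "1 \<le> j \<Longrightarrow> Tv a 0 j = 0"
  unfolding Tv_def using Dv_zero2 by simp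

lemma Tlem:
  assumes k1: "1 \<le> k"
  shows "j \<le> k \<Longrightarrow> b \<le> a \<Longrightarrow> (1 \<le> b \<or> j = 0) \<Longrightarrow> a+b+j = m+2 \<Longrightarrow>
    real_of_int (Fc (Suc (Suc k)) (shp a b j) (replicate m 1 @ [2])) = Tv a b j"
proof (induction m arbitrary: a b j)
  case 0
  define L where "L = Suc (Suc k)"
  define g where "g = (\<lambda>w. Fc L (\<lambda>v. if v = w then shp a b j v - int 2 else shp a b j v) [])"
  have a1: "1 \<le> a" using 0 by auto
  have "Fc L (shp a b j) (replicate 0 1 @ [2]) = (\<Sum>w<L. g w)"
    unfolding g_def using Fc_snoc[of L "shp a b j" "[]" 2] by simp
  also have "\<dots> = g 0 + (\<Sum>w<Suc k. g (Suc w))" unfolding L_def sum.lessThan_Suc_shift ..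
  also have "(\<Sum>w<Suc k. g (Suc w)) = 0"
    unfolding g_def L_def using a1 by (intro sum.neutral ballI Fc_Nil_pos) (auto simp: shp_def)
  finally have F: "Fc L (shp a b j) (replicate 0 1 @ [2]) = g 0" by simp
  consider "a = 2" "b = 0" "j = 0" | "a = 1" "b = 1" "j = 0" using 0 by (cases a; cases b) auto
  then show ?case
  proof cases
    case 1
    have "g 0 = sign (id::nat\<Rightarrow>nat)" unfolding g_def by (rule Fc_Nil) (use 1 in \<open>auto simp: shp_def\<close>)
    moreover have "Tv 2 0 0 = 1" unfolding Tv_def cc_def Dv_def by simp
    ultimately show ?thesis using F 1 unfolding L_def by simp
  next
    case 2
    have "g 0 = sign (Transposition.transpose (0::nat) 1)" unfolding g_def L_def
      by (rule Fc_Nil) (use 2 in \<open>auto simp: shp_def Transposition.transpose_def intro: permutes_swap_id\<close>)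
    moreover have "Tv 1 1 0 = -1" unfolding Tv_def cc_def Dv_def by simp
    ultimately show ?thesis using F 2 unfolding L_def by (simp add: sign_swap_id)
  qed
next
  case (Suc m)
  have a1: "1 \<le> a" using Suc.prems by (cases a) auto
  have rep: "replicate (Suc m) (1::nat) @ [2] = 1 # (replicate m 1 @ [2])" by simp
  define L where "L = Suc (Suc k)"
  have T0: "real_of_int (Fc L (shp (a-1) b j) (replicate m 1 @ [2])) = Tv (a-1) b j"
  proof (cases "b \<le> a - 1")
    case True
    show ?thesis unfolding L_def by (rule Suc.IH) (use Suc.prems True a1 in auto)
  next
    case False
    then have "a = b" "1 \<le> b" using Suc.prems a1 by auto
    then show ?thesis unfolding L_def using zero1[of b k j] Tv_zero1[of b j] by simp
  qed
  have T1: "1 \<le> b \<Longrightarrow> real_of_int (Fc L (shp a (b-1) j) (replicate m 1 @ [2])) = Tv a (b-1) j"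
  proof -
    assume b1: "1 \<le> b"
    show ?thesis
    proof (cases "2 \<le> b \<or> j = 0")
      case True
      show ?thesis unfolding L_def by (rule Suc.IH) (use Suc.prems True b1 in auto)
    next
      case False
      then have "b = 1" "1 \<le> j" using b1 by auto
      then show ?thesis unfolding L_def using zero2[OF k1, of j a] Tv_zero2[of j a] by simp
    qed
  qed
  have T2: "1 \<le> j \<Longrightarrow> real_of_int (Fc L (shp a b (j-1)) (replicate m 1 @ [2])) = Tv a b (j-1)"
    unfolding L_def by (rule Suc.IH) (use Suc.prems in auto)
  have "Fc L (shp a b j) (replicate (Suc m) 1 @ [2]) = Fc L (shp (a-1) b j) (replicate m 1 @ [2])
     + (if 1 \<le> b then Fc L (shp a (b-1) j) (replicate m 1 @ [2]) else 0)
     + (if 1 \<le> j then Fc L (shp a b (j-1)) (replicate m 1 @ [2]) else 0)"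
    unfolding rep L_def by (rule branch[OF k1 Suc.prems(1) a1 Suc.prems(3)])
  then have "real_of_int (Fc L (shp a b j) (replicate (Suc m) 1 @ [2])) = Tv (a-1) b j
     + (if 1 \<le> b then Tv a (b-1) j else 0) + (if 1 \<le> j then Tv a b (j-1) else 0)"
    using T0 T1 T2 by simp
  also have "\<dots> = Tv a b j" using T_rec[OF a1 Suc.prems(2,3)] Suc.prems(4) by simp
  finally show ?case unfolding L_def .
qed

lemma hook2_shp:
  assumes "v < Suc (Suc k)" "k < i" "i \<le> n"
  shows "int (hook2 n i k ! v) = shp (n-i) (i-k) k v"
proof -
  consider "v = 0" | "v = 1" | w where "v = Suc (Suc w)" "w < k"
    using assms(1) by (metis One_nat_def less_Suc_eq_0_disj Suc_less_SucD)
  then show ?thesis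
    by cases (use assms in \<open>auto simp: hook2_def shp_def\<close>)
qed

lemma cl_id: "1 \<le> n \<Longrightarrow> cycle_list n (id_class n) = replicate n 1"
proof -
  assume n: "1 \<le> n"
  have "[1..<Suc n] = 1 # [2..<Suc n]" using n by (simp add: upt_conv_Cons numeral_2_eq_2)
  moreover have "concat (map (\<lambda>j. replicate (id_class n j) j) [2..<Suc n]) = []"
    by (auto simp: id_class_def)
  ultimately show ?thesis unfolding cycle_list_def by (simp add: id_class_def)
qed

lemma cl_tr: "2 \<le> n \<Longrightarrow> cycle_list n (transp_class n) = replicate (n-2) 1 @ [2]"
proof -
  assume n: "2 \<le> n"
  have "[1..<Suc n] = 1 # 2 # [3..<Suc n]" using n by (simp add: upt_conv_Cons numeral_2_eq_2 numeral_3_eq_3)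
  moreover have "concat (map (\<lambda>j. replicate (transp_class n j) j) [3..<Suc n]) = []"
    by (auto simp: transp_class_def)
  ultimately show ?thesis unfolding cycle_list_def by (simp add: transp_class_def)
qed

theorem proposition5p6:
  fixes n i k :: nat and a b :: "nat \<Rightarrow> nat"
  assumes "1 \<le> k" and "k < i" and "i - k \<le> n - i"
    and "cycle_type n a" and "cycle_type n b"
    and "\<forall>j. 1 \<le> j \<and> j < i \<longrightarrow> a j = b j"
  shows "(character (hook2 n i k) n a - character (hook2 n i k) n b
           = (-1) ^ k * (int (a i) - int (b i))) \<and>
         (real_of_int (dimension (hook2 n i k) n)
           = real (n choose i) * real ((i - 1) choose k)
             * (real n - 2 * real i + real k + 1) / (real n - real i + real k + 1)) \<and>
         (real_of_int (character (hook2 n i k) n (transp_class n))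
           / real_of_int (dimension (hook2 n i k) n)
           = 1 - real i * (real n - real i + real k + 1) / real (n choose 2))"
proof -
  have k1: "1 \<le> k" and ki: "k < i" and le: "i - k \<le> n - i" using assms by auto
  have iln: "i < n" using ki le k1 by linarith
  have n3: "3 \<le> n" using ki le k1 by linarith
  have chr: "character (hook2 n i k) n c = Fc (Suc (Suc k)) (shp (n-i) (i-k) k) (cycle_list n c)" for c
    unfolding character_Fc length_hook2 using hook2_shp ki iln by (intro Fc_cong) auto
  have sumn: "n - i + (i - k) + k = n" using ki iln by simp
  have V: "1 \<le> i - k \<or> k = 0" using ki by arith
  have cid: "cycle_list n (id_class n) = replicate n 1" using n3 by (intro cl_id) auto
  have ctr: "cycle_list n (transp_class n) = replicate (n-2) 1 @ [2]" using n3 by (intro cl_tr) auto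
  have dim: "real_of_int (dimension (hook2 n i k) n) = Dv (n-i) (i-k) k"
    unfolding dimension_def chr cid using Dlem[OF k1 order_refl le V] sumn n3 by simp
  have tr: "real_of_int (character (hook2 n i k) n (transp_class n)) = Tv (n-i) (i-k) k"
    unfolding chr ctr using Tlem[OF k1 order_refl le V, of "n-2"] sumn n3 by simp
  have Dform: "Dv (n-i) (i-k) k = real (n choose i) * real ((i - 1) choose k)
             * (real n - 2 * real i + real k + 1) / (real n - real i + real k + 1)"
    unfolding Dv_def sumn using ki iln by (simp add: of_nat_diff algebra_simps)
  have Dpos: "Dv (n-i) (i-k) k > 0"
  proof -
    have "real (n choose i) > 0" using iln by simp
    moreover have "real ((i - 1) choose k) > 0" using ki by simp
    moreover have "real n - 2 * real i + real k + 1 > 0" using le ki iln by linarith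
    moreover have "real n - real i + real k + 1 > 0" using iln by linarith
    ultimately show ?thesis unfolding Dform by (intro divide_pos_pos mult_pos_pos)
  qed
  have e2: "real (2 * (n choose 2)) = real (n * (n - 1))"
    using times_binomial_minus1_eq[of 2 n] by simp
  then have "2 * real (n choose 2) = real n * (real n - 1)" using n3 by (simp add: of_nat_diff)
  then have c2: "real (n choose 2) = real n * (real n - 1) / 2" by simp
  have ratio: "Tv (n-i) (i-k) k / Dv (n-i) (i-k) k = cc (real (n-i)) (real (i-k)) (real k) / (real n * (real n - 1))"
    unfolding Tv_def sumn using Dpos by simp
  have nn: "real n * (real n - 1) > 0" using n3 by (intro mult_pos_pos) auto
  have "cc (real (n-i)) (real (i-k)) (real k) / (real n * (real n - 1))
      = 1 - real i * (real n - real i + real k + 1) / real (n choose 2)"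
    unfolding c2 cc_def using nn ki iln
    by (simp add: of_nat_diff field_simps)
  then have part3: "real_of_int (character (hook2 n i k) n (transp_class n))
           / real_of_int (dimension (hook2 n i k) n)
           = 1 - real i * (real n - real i + real k + 1) / real (n choose 2)"
    unfolding tr dim ratio .
  show ?thesis using part1[OF assms] dim Dform part3 by simp
qed


end
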